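(* For every complex $s=\sigma+it$ with $\frac12<\sigma\leq\frac34$, $$|g(s)|<\frac{1.0053}{\sigma-\frac12}.$$
   Context: For $\mathrm{Re}(s)>1/2$ define $g(s)=\sum_{r\ge 2}\sum_{p}\frac{\log p}{p^{rs}}=\sum_p\frac{\log p}{p^s(p^s-1)}$, where $p$ runs over the primes. *)

theory Defs
  imports "HOL-Analysis.Analysis" "HOL-Computational_Algebra.Primes"
begin

definition g :: "complex \<Rightarrow> complex" where
  "g s = (\<Sum>\<^sub>\<infinity>p\<in>{p::nat. prime p}.
            complex_of_real (ln (real p)) / ((of_nat p powr s) * (of_nat p powr s - 1)))"

end

theory Submission
  imports Defs "HOL-Analysis.Harmonic_Numbers"
begin

lemma prod_primes_dvd:
  assumes "finite A" "\<And>p. p \<in> A \<Longrightarrow> prime p \<and> p dvd (N::nat)"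
  shows "\<Prod>A dvd N"
  using assms
proof (induction A rule: finite_induct)
  case empty then show ?case by simp
next
  case (insert p A)
  have cop: "coprime p (\<Prod>A)"
    using insert by (intro prod_coprime_right) (metis insertCI primes_coprime)
  show ?case using insert cop by (simp add: divides_mult)
qed

lemma mid_primes_dvd:
  "\<Prod>{p. prime p \<and> m+1 < p \<and> p \<le> 2*m+1} dvd ((2*m+1) choose m)"
proof (rule prod_primes_dvd)
  show "finite {p. prime p \<and> m+1 < p \<and> p \<le> 2*m+1}" by simp
  fix p assume p: "p \<in> {p. prime p \<and> m+1 < p \<and> p \<le> 2*m+1}"
  have eq: "fact m * fact (m+1) * ((2*m+1) choose m) = (fact (2*m+1) :: nat)"
    using binomial_fact_lemma[of m "2*m+1"] by (simp add: mult_2)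
  have "p dvd fact (2*m+1)" using p by (simp only: prime_dvd_fact_iff mem_Collect_eq)
  hence "p dvd fact m * fact (m+1) * ((2*m+1) choose m)" by (simp only: eq)
  moreover have "\<not> p dvd fact m" using p by (subst prime_dvd_fact_iff) auto
  moreover have "\<not> p dvd fact (m+1)" using p by (subst prime_dvd_fact_iff) auto
  ultimately have "p dvd ((2*m+1) choose m)" using p by (auto simp: prime_dvd_mult_iff)
  thus "prime p \<and> p dvd ((2*m+1) choose m)" using p by simp
qed

lemma mid_binom_le: "((2*m+1) choose m) \<le> 4^m"
proof -
  have "((2*m+1) choose m) \<le> (\<Sum>k\<le>m. (2 * m + 1 choose k))"
    by (rule member_le_sum) auto
  also have "\<dots> = 2^(2*m)" by (rule binomial_r_part_sum)
  also have "\<dots> = 4^m" by (simp add: power_mult)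
  finally show ?thesis .
qed

lemma primorial_bound: "n \<ge> 2 \<Longrightarrow> 8 * \<Prod>{p. prime p \<and> p \<le> n} \<le> (4::nat)^n"
proof (induction n rule: less_induct)
  case (less n)
  show ?case
  proof (cases "n = 2")
    case True
    have "{p. prime p \<and> p \<le> 2} = {2::nat}"
      using prime_ge_2_nat by (auto simp: le_antisym)
    then show ?thesis using True by simp
  next
    case False
    show ?thesis
    proof (cases "even n")
      case True
      with False less.prems have n4: "n \<ge> 4" by presburger
      have "{p. prime p \<and> p \<le> n} = {p. prime p \<and> p \<le> n - 1}"
      proof (intro Collect_cong iffI conjI)
        fix p assume "prime p \<and> p \<le> n"
        moreover have "p \<noteq> n" using True n4 prime_odd_nat calculation by force
        ultimately show "p \<le> n - 1" by arith
      qed auto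
      moreover have "8 * \<Prod>{p. prime p \<and> p \<le> n - 1} \<le> (4::nat)^(n-1)"
        using less.IH[of "n-1"] n4 by simp
      moreover have "(4::nat)^(n-1) \<le> 4^n" by (intro power_increasing) auto
      ultimately show ?thesis by (metis order_trans)
    next
      case odd: False
      then obtain m where m: "n = 2*m+1" using oddE by blast
      with False less.prems have m1: "m \<ge> 1" by simp
      have split: "{p. prime p \<and> p \<le> n} = {p. prime p \<and> p \<le> m+1} \<union> {p. prime p \<and> m+1 < p \<and> p \<le> 2*m+1}"
        using m by auto
      have "\<Prod>{p. prime p \<and> p \<le> n} = \<Prod>{p. prime p \<and> p \<le> m+1} * \<Prod>{p. prime p \<and> m+1 < p \<and> p \<le> 2*m+1}"
        unfolding split by (rule prod.union_disjoint) auto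
      moreover have "8 * \<Prod>{p. prime p \<and> p \<le> m+1} \<le> (4::nat)^(m+1)"
        using less.IH[of "m+1"] m m1 by simp
      moreover have "\<Prod>{p. prime p \<and> m+1 < p \<and> p \<le> 2*m+1} \<le> 4^m"
        using dvd_imp_le[OF mid_primes_dvd] mid_binom_le[of m] order_trans by fastforce
      ultimately have "8 * \<Prod>{p. prime p \<and> p \<le> n} \<le> 4^(m+1) * 4^m"
        by (metis (no_types, lifting) mult.assoc mult_le_mono)
      also have "\<dots> = 4^n" using m by (simp add: power_add[symmetric])
      finally show ?thesis .
    qed
  qed
qed

lemma theta_bound:
  assumes "n \<ge> 2"
  shows "(\<Sum>p\<in>{p. prime p \<and> p \<le> n}. ln (real p)) \<le> (real n - 3/2) * ln 4"
proof -
  have fin: "finite {p. prime p \<and> p \<le> n}" by simp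
  have pos: "\<And>p. p \<in> {p. prime p \<and> p \<le> n} \<Longrightarrow> real p \<noteq> 0"
    using prime_gt_0_nat by auto
  have "(\<Sum>p\<in>{p. prime p \<and> p \<le> n}. ln (real p)) = ln (\<Prod>p\<in>{p. prime p \<and> p \<le> n}. real p)"
    using ln_prod[OF fin pos] by simp
  also have "(\<Prod>p\<in>{p. prime p \<and> p \<le> n}. real p) = real (\<Prod>{p. prime p \<and> p \<le> n})"
    by simp
  also have "ln (real (\<Prod>{p. prime p \<and> p \<le> n})) \<le> ln (4 ^ n / 8)"
  proof -
    have "real (8 * \<Prod>{p. prime p \<and> p \<le> n}) \<le> real ((4::nat)^n)"
      using primorial_bound[OF assms] by linarith
    hence le: "real (\<Prod>{p. prime p \<and> p \<le> n}) \<le> 4^n/8" by simp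
    have "real (\<Prod>{p. prime p \<and> p \<le> n}) > 0"
      by (simp only: of_nat_prod, intro prod_pos) (auto simp: prime_gt_0_nat)
    then show ?thesis using le by simp
  qed
  also have "ln (4 ^ n / 8 :: real) = real n * ln 4 - 3/2 * ln 4"
  proof -
    have a: "ln (8::real) = 3 * ln 2" using ln_realpow[of 2 3] by simp
    have b: "ln (4::real) = 2 * ln 2" using ln_realpow[of 2 2] by simp
    have "ln (8::real) = 3/2 * ln 4" using a b by simp
    moreover have "ln (4^n/8::real) = n*ln 4 - ln 8" by (simp add: ln_div ln_realpow)
    ultimately show ?thesis by linarith
  qed
  finally show ?thesis by (simp add: algebra_simps)
qed

lemma abel_identity:
  fixes a f :: "nat \<Rightarrow> real"
  shows "(\<Sum>k=2..M. a k * f k) = (\<Sum>k=2..M. (\<Sum>j=2..k. a j) * (f k - f (Suc k))) + (\<Sum>j=2..M. a j) * f (Suc M)"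
proof (induction M)
  case 0 then show ?case by simp
next
  case (Suc M)
  show ?case
  proof (cases "Suc M < 2")
    case True then show ?thesis by simp
  next
    case False
    then show ?thesis using Suc by (simp add: sum.cl_ivl_Suc algebra_simps)
  qed
qed

lemma abel_weight:
  fixes f :: "nat \<Rightarrow> real"
  assumes "M \<ge> 2"
  shows "(\<Sum>k=2..M. C * (real k - 3/2) * (f k - f (Suc k))) + C * (real M - 3/2) * f (Suc M)
         = C * (\<Sum>k=2..M. f k) - C/2 * f 2"
  using assms
proof (induction M rule: nat_induct_at_least)
  case base then show ?case by (simp add: algebra_simps)
next
  case (Suc M)
  let ?g = "\<lambda>k. C * (real k - 3/2) * (f k - f (Suc k))"
  have s1: "(\<Sum>k=2..Suc M. ?g k) = (\<Sum>k=2..M. ?g k) + ?g (Suc M)"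
    using Suc.hyps by (simp add: sum.cl_ivl_Suc)
  have s2: "(\<Sum>k=2..Suc M. f k) = (\<Sum>k=2..M. f k) + f (Suc M)"
    using Suc.hyps by (simp add: sum.cl_ivl_Suc)
  have e: "?g (Suc M) + C * (real (Suc M) - 3/2) * f (Suc (Suc M)) = C * (real M - 1/2) * f (Suc M)"
    by (simp add: algebra_simps)
  show ?case unfolding s1 s2 using Suc.IH e by (simp add: algebra_simps)
qed

lemma abel_bound:
  fixes a f :: "nat \<Rightarrow> real"
  assumes "M \<ge> 2"
    and A: "\<And>k. 2 \<le> k \<Longrightarrow> k \<le> M \<Longrightarrow> (\<Sum>j=2..k. a j) \<le> C * (real k - 3/2)"
    and mono: "\<And>k. 2 \<le> k \<Longrightarrow> f (Suc k) \<le> f k"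
    and nn: "\<And>k. 2 \<le> k \<Longrightarrow> 0 \<le> f k"
  shows "(\<Sum>k=2..M. a k * f k) \<le> C * (\<Sum>k=2..M. f k) - C/2 * f 2"
proof -
  have "(\<Sum>k=2..M. a k * f k) = (\<Sum>k=2..M. (\<Sum>j=2..k. a j) * (f k - f (Suc k))) + (\<Sum>j=2..M. a j) * f (Suc M)"
    by (rule abel_identity)
  also have "\<dots> \<le> (\<Sum>k=2..M. C * (real k - 3/2) * (f k - f (Suc k))) + C * (real M - 3/2) * f (Suc M)"
  proof (intro add_mono sum_mono mult_right_mono)
    fix k assume "k \<in> {2..M}"
    then show "(\<Sum>j=2..k. a j) \<le> C * (real k - 3/2)" "0 \<le> f k - f (Suc k)"
      using A mono by auto
  next
    show "(\<Sum>j=2..M. a j) \<le> C * (real M - 3/2)" using A assms by auto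
    show "0 \<le> f (Suc M)" using nn assms by auto
  qed
  also have "\<dots> = C * (\<Sum>k=2..M. f k) - C/2 * f 2" by (rule abel_weight[OF assms(1)])
  finally show ?thesis .
qed

lemma tele_step:
  fixes k t :: real
  assumes "t > 1" "k \<ge> 2"
  shows "k powr (-t) \<le> ((k-1) powr (1-t) - k powr (1-t)) / (t-1)"
proof -
  have k0: "k > 0" "k - 1 > 0" using assms by auto
  have l: "ln (k-1) - ln k \<le> -1/k"
  proof -
    have e1: "ln ((k-1)/k) = ln (k-1) - ln k" using k0 by (simp add: ln_div)
    have e2: "(k-1)/k = 1 - 1/k" using k0 by (simp add: field_simps)
    have "ln (k-1) - ln k = ln (1 - 1/k)" using e1 e2 by simp
    also have "\<dots> \<le> (1 - 1/k) - 1" using k0 by (intro ln_le_minus_one) (auto simp: field_simps)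
    finally show ?thesis by simp
  qed
  have "(k-1) powr (1-t) = exp ((1-t) * ln k + (1-t) * (ln (k-1) - ln k))"
    using k0 by (simp add: powr_def algebra_simps)
  also have "\<dots> = k powr (1-t) * exp ((1-t) * (ln (k-1) - ln k))"
    using k0 by (simp add: powr_def exp_add)
  also have "\<dots> \<ge> k powr (1-t) * (1 + (t-1) / k)"
  proof (rule mult_left_mono)
    have "(1-t) * (ln (k-1) - ln k) \<ge> (1-t) * (-1/k)"
      using l assms by (intro mult_left_mono_neg) auto
    moreover have "(1-t) * (-1/k) = (t-1)/k" by (cases "k = 0") (simp_all add: field_simps)
    ultimately have "(1-t) * (ln (k-1) - ln k) \<ge> (t-1)/k" by linarith
    thus "1 + (t-1)/k \<le> exp ((1-t) * (ln (k-1) - ln k))"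
      using exp_ge_add_one_self[of "(1-t) * (ln (k-1) - ln k)"] by linarith
  qed simp
  finally have "(k-1) powr (1-t) \<ge> k powr (1-t) + (t-1) * (k powr (1-t) / k)"
    by (simp add: algebra_simps)
  moreover have "k powr (1-t) / k = k powr (-t)"
  proof -
    have "k powr (1-t) = k powr (1 + (-t))" by simp
    also have "\<dots> = k powr 1 * k powr (-t)" by (rule powr_add)
    then show ?thesis using k0 by simp
  qed
  ultimately have "(t-1) * k powr (-t) \<le> (k-1) powr (1-t) - k powr (1-t)" by simp
  thus ?thesis using assms by (simp add: field_simps)
qed

lemma tele_sum:
  fixes t :: real
  assumes "t > 1" "M \<ge> 2"
  shows "(\<Sum>k=3..M. real k powr (-t)) \<le> (2 powr (1-t) - real M powr (1-t)) / (t-1)"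
  using assms(2)
proof (induction M rule: nat_induct_at_least)
  case base then show ?case by simp
next
  case (Suc M)
  have "(\<Sum>k=3..Suc M. real k powr (-t)) = (\<Sum>k=3..M. real k powr (-t)) + real (Suc M) powr (-t)"
    using Suc by (simp add: sum.cl_ivl_Suc)
  also have "\<dots> \<le> (2 powr (1-t) - real M powr (1-t)) / (t-1) + (real M powr (1-t) - real (Suc M) powr (1-t)) / (t-1)"
    using Suc tele_step[of t "real (Suc M)"] assms by (intro add_mono) auto
  also have "\<dots> = (2 powr (1-t) - real (Suc M) powr (1-t)) / (t-1)"
    by (simp add: add_divide_distrib[symmetric])
  finally show ?case .
qed

lemma tele_sum':
  fixes t :: real
  assumes "t > 1"
  shows "(\<Sum>k=3..M. real k powr (-t)) \<le> 2 powr (1-t) / (t-1)"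
proof (cases "M \<ge> 2")
  case True
  have "real M powr (1-t) / (t-1) \<ge> 0" using assms by simp
  then show ?thesis using tele_sum[OF assms True] by (simp add: diff_divide_distrib)
next
  case False then show ?thesis using assms by simp
qed

lemma piece_gen:
  fixes d x y L a b e xa ya :: real
  assumes a0: "0 \<le> a" and ad: "a \<le> d" and db: "d \<le> b" and d0: "0 < d"
    and L0: "0 < L" and L1: "L \<le> 7/10"
    and e0: "0 < e" and xx: "x * x \<ge> 2 * e^2"
    and xxa: "x \<ge> xa" and yya: "y \<ge> ya" and xa1: "xa > 1" and ya1: "ya > 1"
    and Q: "b*(7/10)/(xa*(xa-1)) + (7/10)/e^2 + (14/5)*b/(xa^3*(1/2+3*a)*(1-1/ya)) < 10053/10000"
  shows "d * (L/(x*(x-1)) + 2*L*((2/(x*x))/(2*d) + (2/(x*x*x))/(1/2+3*d)/(1-1/y))) < 10053/10000"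
proof -
  have x1: "x > 1" using xxa xa1 by linarith
  have y1: "y > 1" using yya ya1 by linarith
  have t1: "d * L / (x*(x-1)) \<le> b*(7/10)/(xa*(xa-1))"
  proof (rule frac_le)
    show "0 \<le> b*(7/10)" using d0 db by simp
    show "d * L \<le> b * (7/10)" using d0 db L0 L1 by (intro mult_mono) auto
    show "0 < xa*(xa-1)" using xa1 by simp
    show "xa*(xa-1) \<le> x*(x-1)" using xxa xa1 by (intro mult_mono) auto
  qed
  have t2: "2*L/(x*x) \<le> (7/10)/e^2"
  proof -
    have "2*L/(x*x) \<le> 2*(7/10)/(2*e^2)"
      using L0 L1 e0 xx by (intro frac_le) auto
    then show ?thesis by simp
  qed
  have t3: "(2*L*2) * d / (x*x*x * (1/2+3*d) * (1-1/y)) \<le> (14/5)*b/(xa^3*(1/2+3*a)*(1-1/ya))"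
  proof (rule frac_le)
    show "0 \<le> (14/5)*b" using d0 db by simp
    show "(2*L*2) * d \<le> (14/5)*b" using d0 db L0 L1 by (intro mult_mono) auto
    have "1 - 1/ya > 0" using ya1 by simp
    then show "0 < xa^3*(1/2+3*a)*(1-1/ya)" using xa1 a0 by simp
    have "1/y \<le> 1/ya" using yya ya1 by (intro divide_left_mono) auto
    hence "1 - 1/ya \<le> 1 - 1/y" by simp
    moreover have "xa^3 \<le> x*x*x" using xxa xa1 power_mono[of xa x 3] by (simp add: power3_eq_cube)
    ultimately show "xa^3*(1/2+3*a)*(1-1/ya) \<le> x*x*x*(1/2+3*d)*(1-1/y)"
      using a0 ad xa1 \<open>1 - 1/ya > 0\<close> x1 by (intro mult_mono) (auto simp: zero_le_mult_iff)
  qed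
  have eq: "d * (L/(x*(x-1)) + 2*L*((2/(x*x))/(2*d) + (2/(x*x*x))/(1/2+3*d)/(1-1/y)))
      = d * L / (x*(x-1)) + 2*L/(x*x) + (2*L*2) * d / (x*x*x * (1/2+3*d) * (1-1/y))"
    using d0 x1 y1 by (simp add: field_simps)
  show ?thesis unfolding eq using t1 t2 t3 Q by linarith
qed

definition Qn :: "real \<Rightarrow> real \<Rightarrow> bool" where
  "Qn a b \<longleftrightarrow> (let e = 1 + 2/3*a; xa = 14142/10000*e; ya = 1732/1000*e in
     b*(7/10)/(xa*(xa-1)) + (7/10)/e^2 + (14/5)*b/(xa^3*(1/2+3*a)*(1-1/ya)) < 10053/10000)"


lemma ln2_le: "ln (2::real) < 7/10"
proof -
  have "(1 + (7/10) / real (50::nat)) ^ 50 \<le> exp (7/10::real)"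
    by (rule exp_ge_one_plus_x_over_n_power_n) auto
  moreover have "(2::real) < (1 + (7/10) / real (50::nat)) ^ 50" by (simp add: power_divide)
  ultimately have "2 < exp (7/10::real)" by linarith
  then show ?thesis by (metis exp_less_cancel_iff exp_ln zero_less_numeral)
qed

lemma Qall: assumes "i \<le> (19::nat)" shows "Qn (real i/80) ((real i+1)/80)"
proof -
  have "i = 0 \<or> i = 1 \<or> i = 2 \<or> i = 3 \<or> i = 4 \<or> i = 5 \<or> i = 6 \<or> i = 7 \<or> i = 8 \<or> i = 9 \<or>
        i = 10 \<or> i = 11 \<or> i = 12 \<or> i = 13 \<or> i = 14 \<or> i = 15 \<or> i = 16 \<or> i = 17 \<or> i = 18 \<or> i = 19"
    using assms by arith
  then show ?thesis by (elim disjE) (simp_all add: Qn_def Let_def power_divide field_simps)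
qed

definition ff :: "real \<Rightarrow> nat \<Rightarrow> real" where
  "ff \<sigma> k = 1 / (real k powr \<sigma> * (real k powr \<sigma> - 1))"

lemma ff_nonneg:
  assumes "\<sigma> > 0" "k \<ge> 2" shows "0 \<le> ff \<sigma> k"
proof -
  have "real k powr \<sigma> > 1" using assms by (intro gr_one_powr) auto
  then show ?thesis unfolding ff_def by simp
qed

lemma ff_mono:
  assumes "\<sigma> > 0" "k \<ge> 2" shows "ff \<sigma> (Suc k) \<le> ff \<sigma> k"
proof -
  have x1: "real k powr \<sigma> > 1" using assms by (intro gr_one_powr) auto
  have x2: "real k powr \<sigma> \<le> real (Suc k) powr \<sigma>" using assms by (intro powr_mono2) auto
  have "real k powr \<sigma> * (real k powr \<sigma> - 1) \<le> real (Suc k) powr \<sigma> * (real (Suc k) powr \<sigma> - 1)"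
    using x1 x2 by (intro mult_mono) auto
  moreover have "0 < real k powr \<sigma> * (real k powr \<sigma> - 1)" using x1 by (intro mult_pos_pos) linarith+
  ultimately show ?thesis unfolding ff_def by (intro divide_left_mono) auto
qed

lemma powr_2sig: "c powr (2*\<sigma>) = c powr \<sigma> * c powr (\<sigma>::real)"
proof -
  have "c powr (2*\<sigma>) = c powr (\<sigma> + \<sigma>)" by (simp only: mult_2)
  also have "\<dots> = c powr \<sigma> * c powr \<sigma>" by (rule powr_add)
  finally show ?thesis .
qed

lemma powr_3sig: "c powr (3*\<sigma>) = c powr \<sigma> * c powr \<sigma> * c powr (\<sigma>::real)"
proof -
  have e: "3*\<sigma> = 2*\<sigma> + \<sigma>" by simp
  have "c powr (3*\<sigma>) = c powr (2*\<sigma> + \<sigma>)" by (simp only: e)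
  also have "\<dots> = c powr (2*\<sigma>) * c powr \<sigma>" by (rule powr_add)
  finally show ?thesis by (simp only: powr_2sig)
qed

lemma ff_split:
  assumes "\<sigma> > 0" "k \<ge> 3"
  shows "ff \<sigma> k \<le> real k powr (-(2*\<sigma>)) + real k powr (-(3*\<sigma>)) / (1 - 3 powr (-\<sigma>))"
proof -
  define x where "x = real k powr \<sigma>"
  define y where "y = (3::real) powr \<sigma>"
  have y1: "y > 1" unfolding y_def using assms by (intro gr_one_powr) auto
  have xy: "y \<le> x" unfolding x_def y_def using assms by (intro powr_mono2) auto
  have x1: "x > 1" using xy y1 by linarith
  have e1: "real k powr (-(2*\<sigma>)) = 1/(x*x)"
    unfolding x_def by (simp only: powr_minus powr_2sig inverse_eq_divide)
  have e2: "real k powr (-(3*\<sigma>)) = 1/(x*x*x)"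
    unfolding x_def by (simp only: powr_minus powr_3sig inverse_eq_divide)
  have e3: "(3::real) powr (-\<sigma>) = 1/y" unfolding y_def by (simp only: powr_minus inverse_eq_divide)
  have fe: "1/(x*(x-1)) = 1/(x*x) + (1/(x*x*x))/(1-1/x)"
    using x1 by (simp add: field_simps)
  have "ff \<sigma> k = 1/(x*x) + (1/(x*x*x)) / (1 - 1/x)"
    unfolding ff_def x_def[symmetric] by (rule fe)
  also have "(1/(x*x*x)) / (1 - 1/x) \<le> (1/(x*x*x)) / (1 - 1/y)"
  proof (rule divide_left_mono)
    show "1 - 1/y \<le> 1 - 1/x" using xy y1 by (simp add: frac_le)
    show "0 \<le> 1/(x*x*x)" using x1 by simp
    show "0 < (1 - 1/x) * (1 - 1/y)" using x1 y1 by simp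
  qed
  finally show ?thesis unfolding e1 e2 e3 by simp
qed

lemma sum_ff:
  assumes "\<sigma> > 1/2"
  shows "(\<Sum>k=3..M. ff \<sigma> k) \<le> 2 powr (1-2*\<sigma>)/(2*\<sigma>-1) + 2 powr (1-3*\<sigma>)/(3*\<sigma>-1)/(1 - 3 powr (-\<sigma>))"
proof -
  have den: "1 - 3 powr (-\<sigma>) > 0"
  proof -
    have "(3::real) powr (-\<sigma>) < 3 powr 0" using assms by (intro powr_less_mono) auto
    then show ?thesis by simp
  qed
  have "(\<Sum>k=3..M. ff \<sigma> k) \<le> (\<Sum>k=3..M. real k powr (-(2*\<sigma>)) + real k powr (-(3*\<sigma>)) / (1 - 3 powr (-\<sigma>)))"
    using assms by (intro sum_mono ff_split) auto
  also have "\<dots> = (\<Sum>k=3..M. real k powr (-(2*\<sigma>))) + (\<Sum>k=3..M. real k powr (-(3*\<sigma>))) / (1 - 3 powr (-\<sigma>))"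
    by (simp add: sum.distrib sum_divide_distrib)
  also have "\<dots> \<le> 2 powr (1-2*\<sigma>)/(2*\<sigma>-1) + 2 powr (1-3*\<sigma>)/(3*\<sigma>-1)/(1 - 3 powr (-\<sigma>))"
    using assms den by (intro add_mono divide_right_mono tele_sum') auto
  finally show ?thesis .
qed

lemma primes_sum_eq:
  fixes M :: nat and h :: "nat \<Rightarrow> real"
  shows   "(\<Sum>p\<in>{p. prime p \<and> p \<le> M}. h p) = (\<Sum>k=2..M. (if prime k then h k else 0::real))"
proof -
  have "{p. prime p \<and> p \<le> M} = {k \<in> {2..M}. prime k}"
    using prime_ge_2_nat by auto
  then show ?thesis by (simp only: sum.inter_filter[OF finite_atLeastAtMost])
qed

lemma main_finite:
  assumes "\<sigma> > 1/2" "M \<ge> 2"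
  shows "(\<Sum>p\<in>{p. prime p \<and> p \<le> M}. ln (real p) * ff \<sigma> p)
     \<le> ln 2 * ff \<sigma> 2 + 2 * ln 2 * (2 powr (1-2*\<sigma>)/(2*\<sigma>-1) + 2 powr (1-3*\<sigma>)/(3*\<sigma>-1)/(1 - 3 powr (-\<sigma>)))"
proof -
  define a where "a k = (if prime k then ln (real k) else 0)" for k
  have l4: "ln (4::real) = 2 * ln 2" using ln_realpow[of 2 2] by simp
  have "(\<Sum>p\<in>{p. prime p \<and> p \<le> M}. ln (real p) * ff \<sigma> p) = (\<Sum>k=2..M. a k * ff \<sigma> k)"
    unfolding primes_sum_eq a_def by (intro sum.cong) auto
  also have "\<dots> \<le> ln 4 * (\<Sum>k=2..M. ff \<sigma> k) - ln 4/2 * ff \<sigma> 2"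
  proof (rule abel_bound[OF assms(2)])
    fix k assume k: "2 \<le> k" "k \<le> M"
    have "(\<Sum>j=2..k. a j) = (\<Sum>p\<in>{p. prime p \<and> p \<le> k}. ln (real p))"
      unfolding primes_sum_eq a_def by simp
    also have "\<dots> \<le> (real k - 3/2) * ln 4" by (rule theta_bound[OF k(1)])
    finally show "(\<Sum>j=2..k. a j) \<le> ln 4 * (real k - 3/2)" by (simp add: mult.commute)
  next
    fix k :: nat assume "2 \<le> k"
    then show "ff \<sigma> (Suc k) \<le> ff \<sigma> k" "0 \<le> ff \<sigma> k" using assms by (auto intro: ff_mono ff_nonneg)
  qed
  also have "(\<Sum>k=2..M. ff \<sigma> k) = ff \<sigma> 2 + (\<Sum>k=3..M. ff \<sigma> k)"
    using assms by (subst sum.atLeast_Suc_atMost) auto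
  also have "ln 4 * (ff \<sigma> 2 + (\<Sum>k=3..M. ff \<sigma> k)) - ln 4/2 * ff \<sigma> 2
      = ln 2 * ff \<sigma> 2 + 2 * ln 2 * (\<Sum>k=3..M. ff \<sigma> k)" by (simp add: l4 algebra_simps)
  also have "\<dots> \<le> ln 2 * ff \<sigma> 2 + 2 * ln 2 * (2 powr (1-2*\<sigma>)/(2*\<sigma>-1) + 2 powr (1-3*\<sigma>)/(3*\<sigma>-1)/(1 - 3 powr (-\<sigma>)))"
    using assms by (intro add_left_mono mult_left_mono sum_ff) auto
  finally show ?thesis .
qed

lemma delta_bound:
  assumes s1: "1/2 < \<sigma>" and s2: "\<sigma> \<le> 3/4"
  shows "(\<sigma> - 1/2) * (ln 2 * ff \<sigma> 2 + 2 * ln 2 * (2 powr (1-2*\<sigma>)/(2*\<sigma>-1) + 2 powr (1-3*\<sigma>)/(3*\<sigma>-1)/(1 - 3 powr (-\<sigma>)))) < 10053/10000"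
proof -
  define d where "d = \<sigma> - 1/2"
  define x where "x = (2::real) powr \<sigma>"
  define y where "y = (3::real) powr \<sigma>"
  define L where "L = ln (2::real)"
  have d0: "0 < d" "d \<le> 1/4" using s1 s2 unfolding d_def by auto
  have L1: "2/3 \<le> L" unfolding L_def by (rule ln2_ge_two_thirds)
  have L2: "L \<le> 7/10" unfolding L_def using ln2_le by linarith
  define i where "i = min 19 (nat \<lfloor>80*d\<rfloor>)"
  define a where "a = real i / 80"
  define b where "b = (real i + 1) / 80"
  have i19: "i \<le> 19" unfolding i_def by simp
  have fl0: "0 \<le> \<lfloor>80*d\<rfloor>" using d0 by simp
  have ad: "a \<le> d"
  proof -
    have "real i \<le> real (nat \<lfloor>80*d\<rfloor>)" unfolding i_def by simp
    also have "\<dots> = of_int \<lfloor>80*d\<rfloor>" using fl0 by simp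
    also have "\<dots> \<le> 80*d" by (rule of_int_floor_le)
    finally show ?thesis unfolding a_def by simp
  qed
  have db: "d \<le> b"
  proof (cases "nat \<lfloor>80*d\<rfloor> \<le> 19")
    case True
    then have "real i = of_int \<lfloor>80*d\<rfloor>" unfolding i_def using fl0 by simp
    moreover have "80*d < of_int \<lfloor>80*d\<rfloor> + 1" by (rule real_of_int_floor_add_one_gt)
    ultimately have "80*d \<le> real i + 1" by linarith
    then show ?thesis unfolding b_def by simp
  next
    case False
    then have "i = 19" unfolding i_def by simp
    then show ?thesis unfolding b_def using d0 by simp
  qed
  have a0: "0 \<le> a" unfolding a_def by simp
  have Q: "Qn a b" unfolding a_def b_def by (rule Qall[OF i19])
  define e where "e = 1 + 2/3 * a"
  have e1: "e \<ge> 1" unfolding e_def using a0 by simp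
  have w2: "2 powr d \<ge> e"
  proof -
    have "2 powr d = exp (d * L)" unfolding L_def by (simp add: powr_def mult.commute)
    also have "\<dots> \<ge> 1 + d * L" by (rule exp_ge_add_one_self)
    finally have "2 powr d \<ge> 1 + d * L" .
    moreover have "d * L \<ge> a * (2/3)" using ad a0 L1 by (intro mult_mono) auto
    ultimately show ?thesis unfolding e_def by simp
  qed
  have w3: "3 powr d \<ge> e"
  proof -
    have L3: "ln (3::real) \<ge> L" unfolding L_def by simp
    have "3 powr d = exp (d * ln 3)" by (simp add: powr_def mult.commute)
    also have "\<dots> \<ge> 1 + d * ln 3" by (rule exp_ge_add_one_self)
    finally have "3 powr d \<ge> 1 + d * ln 3" .
    moreover have "d * ln 3 \<ge> a * (2/3)" using ad a0 L1 L3 by (intro mult_mono) auto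
    ultimately show ?thesis unfolding e_def by simp
  qed
  have sig: "\<sigma> = 1/2 + d" unfolding d_def by simp
  have x_eq: "x = sqrt 2 * 2 powr d"
    unfolding x_def sig by (simp add: powr_add powr_half_sqrt)
  have y_eq: "y = sqrt 3 * 3 powr d"
    unfolding y_def sig by (simp add: powr_add powr_half_sqrt)
  have sq2: "sqrt 2 \<ge> 14142/10000" by (rule real_le_rsqrt) (simp add: power2_eq_square)
  have sq3: "sqrt 3 \<ge> 1732/1000" by (rule real_le_rsqrt) (simp add: power2_eq_square)
  have xxa: "x \<ge> 14142/10000 * e" unfolding x_eq using sq2 w2 e1 by (intro mult_mono) auto
  have yya: "y \<ge> 1732/1000 * e" unfolding y_eq using sq3 w3 e1 by (intro mult_mono) auto
  have xx: "x * x \<ge> 2 * e^2"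
  proof -
    have "x * x = 2 * (2 powr d)^2" unfolding x_eq by (simp add: power2_eq_square)
    moreover have "e^2 \<le> (2 powr d)^2" using w2 e1 by (intro power_mono) auto
    ultimately show ?thesis by simp
  qed
  have xa1: "14142/10000 * e > 1" using e1 by simp
  have ya1: "1732/1000 * e > 1" using e1 by simp
  have Q': "b*(7/10)/((14142/10000*e)*((14142/10000*e)-1)) + (7/10)/e^2 + (14/5)*b/((14142/10000*e)^3*(1/2+3*a)*(1-1/(1732/1000*e))) < 10053/10000"
    using Q unfolding Qn_def Let_def e_def by simp
  have main: "d * (L/(x*(x-1)) + 2*L*((2/(x*x))/(2*d) + (2/(x*x*x))/(1/2+3*d)/(1-1/y))) < 10053/10000"
    by (rule piece_gen[OF a0 ad db d0(1) _ L2 _ xx xxa yya xa1 ya1 Q']) (use L1 e1 in auto)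
  have f2: "ff \<sigma> 2 = 1/(x*(x-1))" unfolding ff_def x_def by simp
  have p2: "2 powr (1-2*\<sigma>) = 2/(x*x)"
    unfolding x_def by (simp only: powr_diff powr_2sig powr_one_eq_one powr_one; simp)
  have p3: "2 powr (1-3*\<sigma>) = 2/(x*x*x)"
    unfolding x_def by (simp only: powr_diff powr_3sig powr_one; simp)
  have p4: "(3::real) powr (-\<sigma>) = 1/y" unfolding y_def by (simp only: powr_minus inverse_eq_divide)
  have q1: "2*\<sigma>-1 = 2*d" "3*\<sigma>-1 = 1/2+3*d" unfolding d_def by simp_all
  show ?thesis using main unfolding f2 p2 p3 p4 q1 d_def[symmetric] L_def by simp
qed

theorem mainTheorem7:
  fixes s :: complex
  assumes "1/2 < Re s" and "Re s \<le> 3/4"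
  shows "cmod (g s) < 1.0053 / (Re s - 1/2)"
proof -
  define \<sigma> where "\<sigma> = Re s"
  have s1: "1/2 < \<sigma>" "\<sigma> \<le> 3/4" using assms unfolding \<sigma>_def by auto
  define h where "h p = complex_of_real (ln (real p)) / ((of_nat p powr s) * (of_nat p powr s - 1))" for p :: nat
  define B where "B = ln 2 * ff \<sigma> 2 + 2 * ln 2 * (2 powr (1-2*\<sigma>)/(2*\<sigma>-1) + 2 powr (1-3*\<sigma>)/(3*\<sigma>-1)/(1 - 3 powr (-\<sigma>)))"
  have hb: "norm (h p) \<le> ln (real p) * ff \<sigma> p" if p: "prime p" for p
  proof -
    have p2: "real p \<ge> 2" using prime_ge_2_nat[OF p] by simp
    define X where "X = real p powr \<sigma>"
    have X1: "X > 1" unfolding X_def using p2 s1 by (intro gr_one_powr) auto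
    have nA: "norm (of_nat p powr s :: complex) = X"
      using norm_powr_real_powr[of "of_nat p" s] unfolding X_def \<sigma>_def by simp
    have nA1: "norm (of_nat p powr s - 1 :: complex) \<ge> X - 1"
      using norm_triangle_ineq2[of "of_nat p powr s :: complex" 1] nA by simp
    have lp: "ln (real p) \<ge> 0" using p2 by simp
    have "norm (h p) = ln (real p) / (X * norm (of_nat p powr s - 1 :: complex))"
      unfolding h_def using lp nA by (simp add: norm_divide norm_mult)
    also have "\<dots> \<le> ln (real p) / (X * (X - 1))"
      using lp X1 nA1 by (intro divide_left_mono mult_left_mono mult_pos_pos) auto
    also have "\<dots> = ln (real p) * ff \<sigma> p" unfolding ff_def X_def by simp
    finally show ?thesis .
  qed
  have fin: "(\<Sum>p\<in>F. norm (h p)) \<le> B" if F: "finite F" "F \<subseteq> {p. prime p}" for F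
  proof -
    define M where "M = Max (insert 2 F)"
    have M2: "M \<ge> 2" unfolding M_def using F by simp
    have sub: "F \<subseteq> {p. prime p \<and> p \<le> M}" unfolding M_def using F by auto
    have "(\<Sum>p\<in>F. norm (h p)) \<le> (\<Sum>p\<in>F. ln (real p) * ff \<sigma> p)"
      using F hb by (intro sum_mono) auto
    also have "\<dots> \<le> (\<Sum>p\<in>{p. prime p \<and> p \<le> M}. ln (real p) * ff \<sigma> p)"
    proof (rule sum_mono2)
      show "finite {p. prime p \<and> p \<le> M}" by simp
      show "F \<subseteq> {p. prime p \<and> p \<le> M}" by (rule sub)
      fix p assume "p \<in> {p. prime p \<and> p \<le> M} - F"
      then have "p \<ge> 2" using prime_ge_2_nat by auto
      then show "0 \<le> ln (real p) * ff \<sigma> p" using s1 ff_nonneg[of \<sigma> p] by simp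
    qed
    also have "\<dots> \<le> B" unfolding B_def using s1 M2 by (intro main_finite) auto
    finally show ?thesis .
  qed
  have abs: "(\<lambda>p. norm (h p)) summable_on {p. prime p}"
    by (rule nonneg_bdd_above_summable_on) (auto intro!: bdd_aboveI2 fin)
  have "cmod (g s) = norm (infsum h {p. prime p})" unfolding g_def h_def by simp
  also have "\<dots> \<le> infsum (\<lambda>p. norm (h p)) {p. prime p}" by (rule norm_infsum_bound[OF abs])
  also have "\<dots> \<le> B" by (rule infsum_le_finite_sums[OF abs]) (use fin in auto)
  also have "B < 1.0053 / (Re s - 1/2)"
  proof -
    have "(\<sigma> - 1/2) * B < 10053/10000" unfolding B_def using delta_bound[OF s1] .
    then have h1: "B * (Re s - 1/2) < 10053/10000" unfolding \<sigma>_def by (simp only: mult.commute)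
    have pos: "Re s - 1/2 > 0" using assms by simp
    have "B < (10053/10000) / (Re s - 1/2)" using h1 pos by (simp only: pos_less_divide_eq)
    then show ?thesis by simp
  qed
  finally show ?thesis .
qed

end
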